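(* Let $\Gamma$ be a connected signed graph on $N$ vertices and, for real $t$, let $\mathcal{L}(t)=\mathcal{L}(\Gamma(t))$. The subspace $\mathbf{1}^\perp=\{v\in\mathbb{R}^N:\sum_i v_i=0\}$ is invariant under every $\mathcal{L}(t)$; let $\lambda_1(t),\dots,\lambda_{N-1}(t)$ be the (analytic) eigenvalue branches of $\mathcal{L}(t)$ restricted to $\mathbf{1}^\perp$. Then each $\lambda_i(t)$ is a non-decreasing function of $t$, and each crosses zero transversely: if $\lambda_i(t)=0$ then $\lambda_i'(t)>0$.
   Context: A signed graph $\Gamma$ is a finite simple undirected graph with vertex set $\{1,\dots,N\}$ in which every edge $\{i,j\}$ carries a nonzero real weight $\gamma_{ij}$, which may be of either sign. For real $t$, $\Gamma(t)$ is the weighted graph with the same edges and weights $\gamma_{ij}(t)=\gamma_{ij}$ if $\gamma_{ij}>0$ and $\gamma_{ij}(t)=t\gamma_{ij}$ if $\gamma_{ij}<0$. For a weighted graph with weights $w_{ij}$, its Laplacian is the symmetric matrix with off-diagonal entries $w_{ij}$ (zero for non-edges) and diagonal entries $-\sum_{k\ne i}w_{ik}$. $\mathbf{1}=(1,\dots,1)$. *)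

theory Defs
  imports "HOL-Analysis.Analysis"
begin

text \<open>Vertices are 0,...,N-1 (the paper's 1,...,N shifted by one).
  A signed graph is given by its weight function: gamma i j is the weight of edge {i,j}
  and is 0 exactly for non-edges.\<close>

definition signed_graph :: "nat \<Rightarrow> (nat \<Rightarrow> nat \<Rightarrow> real) \<Rightarrow> bool" where
  "signed_graph N \<gamma> \<longleftrightarrow>
     (\<forall>i j. \<gamma> i j = \<gamma> j i) \<and> (\<forall>i. \<gamma> i i = 0) \<and>
     (\<forall>i j. (N \<le> i \<or> N \<le> j) \<longrightarrow> \<gamma> i j = 0)"

definition sg_edges :: "nat \<Rightarrow> (nat \<Rightarrow> nat \<Rightarrow> real) \<Rightarrow> (nat \<times> nat) set" where
  "sg_edges N \<gamma> = {(a, b). a < N \<and> b < N \<and> \<gamma> a b \<noteq> 0}"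

definition sg_connected :: "nat \<Rightarrow> (nat \<Rightarrow> nat \<Rightarrow> real) \<Rightarrow> bool" where
  "sg_connected N \<gamma> \<longleftrightarrow> (\<forall>i<N. \<forall>j<N. (i, j) \<in> (sg_edges N \<gamma>)\<^sup>*)"

definition sg_at :: "(nat \<Rightarrow> nat \<Rightarrow> real) \<Rightarrow> real \<Rightarrow> nat \<Rightarrow> nat \<Rightarrow> real" where
  "sg_at \<gamma> t i j = (if \<gamma> i j < 0 then t * \<gamma> i j else \<gamma> i j)"

definition laplacian :: "nat \<Rightarrow> (nat \<Rightarrow> nat \<Rightarrow> real) \<Rightarrow> nat \<Rightarrow> nat \<Rightarrow> real" where
  "laplacian N w i j = (if i = j then - (\<Sum>k\<in>{0..<N} - {i}. w i k) else w i j)"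

definition mat_vec :: "nat \<Rightarrow> (nat \<Rightarrow> nat \<Rightarrow> real) \<Rightarrow> (nat \<Rightarrow> real) \<Rightarrow> nat \<Rightarrow> real" where
  "mat_vec N A v = (\<lambda>i. \<Sum>j<N. A i j * v j)"

definition real_analytic :: "(real \<Rightarrow> real) \<Rightarrow> bool" where
  "real_analytic f \<longleftrightarrow>
     (\<forall>x. \<exists>r>0. \<exists>c::nat \<Rightarrow> real. \<forall>y. \<bar>y - x\<bar> < r \<longrightarrow> (\<lambda>n. c n * (y - x) ^ n) sums f y)"

text \<open>lam 0, ..., lam (N-2) are analytic eigenvalue branches of L(t) restricted to 1-perp:
  each is real analytic, and for every t the values lam i t are the eigenvalues, with
  multiplicity, of the (symmetric) restriction of L(t) to 1-perp, i.e. they are the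
  eigenvalues of an orthonormal eigenbasis of 1-perp.\<close>
definition restricted_eigen_branches ::
  "nat \<Rightarrow> (real \<Rightarrow> nat \<Rightarrow> nat \<Rightarrow> real) \<Rightarrow> (nat \<Rightarrow> real \<Rightarrow> real) \<Rightarrow> bool" where
  "restricted_eigen_branches N L lam \<longleftrightarrow>
     (\<forall>i<N-1. real_analytic (lam i)) \<and>
     (\<forall>t. \<exists>v::nat \<Rightarrow> nat \<Rightarrow> real.
        (\<forall>i<N-1. (\<Sum>k<N. v i k) = 0) \<and>
        (\<forall>i<N-1. \<forall>j<N-1. (\<Sum>k<N. v i k * v j k) = (if i = j then 1 else 0)) \<and>
        (\<forall>i<N-1. \<forall>k<N. mat_vec N (L t) (v i) k = lam i t * v i k))"

end

theory Submission
  imports Defs "Jordan_Normal_Form.Determinant"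
begin


definition ip :: "nat \<Rightarrow> (nat \<Rightarrow> real) \<Rightarrow> (nat \<Rightarrow> real) \<Rightarrow> real" where
  "ip N u v = (\<Sum>k<N. u k * v k)"

definition Wp :: "(nat \<Rightarrow> nat \<Rightarrow> real) \<Rightarrow> nat \<Rightarrow> nat \<Rightarrow> real" where
  "Wp \<gamma> i j = (if \<gamma> i j < 0 then 0 else \<gamma> i j)"
definition Wn :: "(nat \<Rightarrow> nat \<Rightarrow> real) \<Rightarrow> nat \<Rightarrow> nat \<Rightarrow> real" where
  "Wn \<gamma> i j = (if \<gamma> i j < 0 then \<gamma> i j else 0)"

lemma lap_lin:
  "laplacian N (sg_at \<gamma> t) i j = laplacian N (Wp \<gamma>) i j + t * laplacian N (Wn \<gamma>) i j"
proof -
  have "(\<Sum>k\<in>{0..<N} - {i}. sg_at \<gamma> t i k) =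
        (\<Sum>k\<in>{0..<N} - {i}. Wp \<gamma> i k) + t * (\<Sum>k\<in>{0..<N} - {i}. Wn \<gamma> i k)"
    by (simp add: sum_distrib_left sum.distrib[symmetric] sg_at_def Wp_def Wn_def, intro sum.cong, auto)
  then show ?thesis unfolding laplacian_def
    by (auto simp: sg_at_def Wp_def Wn_def)
qed

lemma lap_mv:
  assumes "w a a = 0" "a < N"
  shows "mat_vec N (laplacian N w) v a = (\<Sum>j<N. w a j * (v j - v a))"
proof -
  have fin: "finite {..<N}" by simp
  have S: "{0..<N} - {a} = {..<N} - {a}" by auto
  have "mat_vec N (laplacian N w) v a = laplacian N w a a * v a + (\<Sum>j\<in>{..<N} - {a}. laplacian N w a j * v j)"
    unfolding mat_vec_def using sum.remove[OF fin, of a] assms by simp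
  also have "\<dots> = - (\<Sum>j\<in>{..<N}-{a}. w a j) * v a + (\<Sum>j\<in>{..<N} - {a}. w a j * v j)"
    unfolding laplacian_def S by simp
  also have "\<dots> = (\<Sum>j\<in>{..<N} - {a}. w a j * (v j - v a))"
    by (simp add: right_diff_distrib sum_subtractf sum_distrib_left sum_distrib_right mult.commute)
  also have "\<dots> = (\<Sum>j<N. w a j * (v j - v a))"
    using sum.remove[OF fin, of a "\<lambda>j. w a j * (v j - v a)"] assms by simp
  finally show ?thesis .
qed

lemma quad_sym:
  fixes w :: "nat \<Rightarrow> nat \<Rightarrow> real"
  assumes "\<And>i j. w i j = w j i"
  shows "(\<Sum>a<N. v a * (\<Sum>j<N. w a j * (v j - v a))) = - (\<Sum>a<N. \<Sum>j<N. w a j * (v j - v a)^2) / 2"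
proof -
  define S where "S = (\<Sum>a<N. \<Sum>j<N. w a j * (v a * (v j - v a)))"
  have S1: "(\<Sum>a<N. v a * (\<Sum>j<N. w a j * (v j - v a))) = S"
    unfolding S_def by (simp add: sum_distrib_left algebra_simps)
  have "S = (\<Sum>j<N. \<Sum>a<N. w a j * (v a * (v j - v a)))"
    unfolding S_def by (rule sum.swap)
  also have "\<dots> = (\<Sum>a<N. \<Sum>j<N. w a j * (v j * (v a - v j)))"
    using assms by simp
  finally have S2: "S = (\<Sum>a<N. \<Sum>j<N. w a j * (v j * (v a - v j)))" .
  have "2 * S = S + S" by simp
  also have "\<dots> = (\<Sum>a<N. \<Sum>j<N. w a j * (v a * (v j - v a)) + w a j * (v j * (v a - v j)))"
    by (subst S2) (simp add: S_def sum.distrib)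
  also have "\<dots> = - (\<Sum>a<N. \<Sum>j<N. w a j * (v j - v a)^2)"
    by (simp add: sum_negf[symmetric] power2_eq_square algebra_simps)
  finally show ?thesis using S1 by simp
qed

lemma colsum_sym:
  fixes w :: "nat \<Rightarrow> nat \<Rightarrow> real"
  assumes "\<And>i j. w i j = w j i"
  shows "(\<Sum>a<N. \<Sum>j<N. w a j * (v j - v a)) = 0"
proof -
  define T where "T = (\<Sum>a<N. \<Sum>j<N. w a j * (v j - v a))"
  have "T = (\<Sum>j<N. \<Sum>a<N. w a j * (v j - v a))" unfolding T_def by (rule sum.swap)
  also have "\<dots> = (\<Sum>a<N. \<Sum>j<N. w a j * (v a - v j))" using assms by simp
  also have "\<dots> = - T" unfolding T_def by (simp add: sum_negf[symmetric] algebra_simps)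
  finally show ?thesis unfolding T_def by simp
qed

lemma sg_props:
  assumes "signed_graph N \<gamma>"
  shows "\<And>i j. \<gamma> i j = \<gamma> j i" "\<And>i. \<gamma> i i = 0"
  using assms unfolding signed_graph_def by auto

lemma qform:
  fixes w :: "nat \<Rightarrow> nat \<Rightarrow> real"
  assumes "\<And>i j. w i j = w j i" "\<And>i. w i i = 0"
  shows "ip N v (mat_vec N (laplacian N w) v) = - (\<Sum>a<N. \<Sum>j<N. w a j * (v j - v a)^2) / 2"
proof -
  have "ip N v (mat_vec N (laplacian N w) v) = (\<Sum>a<N. v a * (\<Sum>j<N. w a j * (v j - v a)))"
    unfolding ip_def by (intro sum.cong refl) (simp add: lap_mv assms)
  then show ?thesis using quad_sym[where w=w and N=N and v=v] assms by simp
qed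

lemma colsum_sg:
  assumes "signed_graph N \<gamma>"
  shows "(\<Sum>k<N. mat_vec N (laplacian N (sg_at \<gamma> t)) v k) = 0"
proof -
  have s: "\<And>i j. sg_at \<gamma> t i j = sg_at \<gamma> t j i" "\<And>i. sg_at \<gamma> t i i = 0"
    using sg_props[OF assms] unfolding sg_at_def by auto
  have "(\<Sum>k<N. mat_vec N (laplacian N (sg_at \<gamma> t)) v k) = (\<Sum>a<N. \<Sum>j<N. sg_at \<gamma> t a j * (v j - v a))"
    by (intro sum.cong refl) (simp add: lap_mv s)
  then show ?thesis using colsum_sym[where w="sg_at \<gamma> t" and N=N and v=v] s by simp
qed

lemma Wp_props:
  assumes "signed_graph N \<gamma>"
  shows "\<And>i j. Wp \<gamma> i j = Wp \<gamma> j i" "\<And>i. Wp \<gamma> i i = 0" "\<And>i j. Wp \<gamma> i j \<ge> 0"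
  using sg_props[OF assms] unfolding Wp_def by auto

lemma Wn_props:
  assumes "signed_graph N \<gamma>"
  shows "\<And>i j. Wn \<gamma> i j = Wn \<gamma> j i" "\<And>i. Wn \<gamma> i i = 0" "\<And>i j. Wn \<gamma> i j \<le> 0"
  using sg_props[OF assms] unfolding Wn_def by auto

lemma qA_le:
  assumes "signed_graph N \<gamma>"
  shows "ip N v (mat_vec N (laplacian N (Wp \<gamma>)) v) \<le> 0"
proof -
  have "0 \<le> (\<Sum>a<N. \<Sum>j<N. Wp \<gamma> a j * (v j - v a)^2)"
    using Wp_props[OF assms] by (intro sum_nonneg mult_nonneg_nonneg) auto
  then show ?thesis using qform[of "Wp \<gamma>" N v] Wp_props[OF assms] by simp
qed

lemma qB_ge:
  assumes "signed_graph N \<gamma>"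
  shows "ip N v (mat_vec N (laplacian N (Wn \<gamma>)) v) \<ge> 0"
proof -
  have "(\<Sum>a<N. \<Sum>j<N. Wn \<gamma> a j * (v j - v a)^2) \<le> 0"
    using Wn_props[OF assms] by (intro sum_nonpos mult_nonpos_nonneg) auto
  then show ?thesis using qform[of "Wn \<gamma>" N v] Wn_props[OF assms] by simp
qed

lemma double_sum_zero:
  fixes F :: "nat \<Rightarrow> nat \<Rightarrow> real"
  assumes "\<And>a j. 0 \<le> F a j" "(\<Sum>a<N. \<Sum>j<N. F a j) = 0" "a < N" "j < N"
  shows "F a j = 0"
proof -
  have "\<forall>a\<in>{..<N}. (\<Sum>j<N. F a j) = 0"
    using sum_nonneg_eq_0_iff[of "{..<N}" "\<lambda>a. \<Sum>j<N. F a j"] assms(1,2) by (simp add: sum_nonneg)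
  then have "(\<Sum>j<N. F a j) = 0" using assms(3) by simp
  then show ?thesis using sum_nonneg_eq_0_iff[of "{..<N}" "F a"] assms(1,4) by simp
qed

lemma conn_zero:
  assumes sg: "signed_graph N \<gamma>" and c: "sg_connected N \<gamma>" and N: "0 < N"
    and s: "(\<Sum>k<N. v k) = 0"
    and qa: "ip N v (mat_vec N (laplacian N (Wp \<gamma>)) v) = 0"
    and qb: "ip N v (mat_vec N (laplacian N (Wn \<gamma>)) v) = 0"
  shows "\<forall>k<N. v k = 0"
proof -
  have pa: "(\<Sum>a<N. \<Sum>j<N. Wp \<gamma> a j * (v j - v a)^2) = 0"
    using qa qform[of "Wp \<gamma>" N v] Wp_props[OF sg] by simp
  have pb: "(\<Sum>a<N. \<Sum>j<N. - Wn \<gamma> a j * (v j - v a)^2) = 0"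
    using qb qform[of "Wn \<gamma>" N v] Wn_props[OF sg] by (simp add: sum_negf)
  have ta: "Wp \<gamma> a j * (v j - v a)^2 = 0" if "a < N" "j < N" for a j
  proof -
    have "0 \<le> Wp \<gamma> a j * (v j - v a)^2" for a j
      using Wp_props(3)[OF sg, of a j] by (rule mult_nonneg_nonneg) simp
    then show ?thesis
      using double_sum_zero[of "\<lambda>a j. Wp \<gamma> a j * (v j - v a)^2" N a j] pa that by blast
  qed
  have nn: "0 \<le> - Wn \<gamma> a j * (v j - v a)^2" for a j
  proof (rule mult_nonneg_nonneg)
    show "0 \<le> - Wn \<gamma> a j" using Wn_props(3)[OF sg, of a j] by linarith
  qed simp
  have tb: "- Wn \<gamma> a j * (v j - v a)^2 = 0" if "a < N" "j < N" for a j
    using double_sum_zero[of "\<lambda>a j. - Wn \<gamma> a j * (v j - v a)^2" N a j] nn pb that by blast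
  have edge: "v a = v j" if "(a, j) \<in> sg_edges N \<gamma>" for a j
  proof -
    from that have a: "a < N" "j < N" "\<gamma> a j \<noteq> 0" by (auto simp: sg_edges_def)
    show ?thesis
    proof (cases "\<gamma> a j < 0")
      case True
      then have "Wn \<gamma> a j \<noteq> 0" by (simp add: Wn_def)
      then show ?thesis using tb[OF a(1,2)] by simp
    next
      case False
      then have "Wp \<gamma> a j \<noteq> 0" using a by (simp add: Wp_def)
      then show ?thesis using ta[OF a(1,2)] by simp
    qed
  qed
  have path: "v a = v j" if "(a, j) \<in> (sg_edges N \<gamma>)\<^sup>*" for a j
    using that
  proof (induction rule: rtrancl_induct)
    case base then show ?case by simp
  next
    case (step y z) then show ?case using edge[OF step.hyps(2)] by simp
  qed
  have all: "\<forall>k<N. v k = v 0"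
  proof (intro allI impI)
    fix k assume "k < N"
    then have "(0, k) \<in> (sg_edges N \<gamma>)\<^sup>*" using c N unfolding sg_connected_def by blast
    then show "v k = v 0" using path by metis
  qed
  then have "\<And>k. k \<in> {..<N} \<Longrightarrow> v k = v 0" by blast
  then have "(\<Sum>k<N. v k) = (\<Sum>k<N. v 0)" by (rule sum.cong[OF refl])
  then have "real N * v 0 = 0" using s by (simp only: sum_constant) simp
  then have "v 0 = 0" using N by simp
  then show ?thesis using all by (metis (no_types))
qed




lemma completeness:
 fixes f :: "nat \<Rightarrow> nat \<Rightarrow> real" and n :: nat
 assumes "\<forall>i<n. \<forall>j<n. (\<Sum>k<n. f i k * f j k) = (if i=j then 1 else 0)"
 shows "\<forall>a<n. \<forall>b<n. (\<Sum>i<n. f i a * f i b) = (if a=b then 1 else 0)"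
proof -
  define F where "F = mat n n (\<lambda>(i,k). f i k)"
  have F: "F \<in> carrier_mat n n" by (simp add: F_def)
  have "F * transpose_mat F = 1\<^sub>m n"
    using assms by (auto simp: F_def scalar_prod_def atLeast0LessThan intro!: eq_matI)
  hence "transpose_mat F * F = 1\<^sub>m n" using F by (intro mat_mult_left_right_inverse[of F n]) auto
  then have "\<And>a b. a<n \<Longrightarrow> b<n \<Longrightarrow> (transpose_mat F * F) $$ (a,b) = 1\<^sub>m n $$ (a,b)" by simp
  then show ?thesis using F
    by (auto simp: F_def scalar_prod_def atLeast0LessThan)
qed

lemma expand:
  fixes e :: "nat \<Rightarrow> nat \<Rightarrow> real"
  assumes N: "0 < N" and z: "\<forall>i<N-1. (\<Sum>k<N. e i k) = 0"
    and on: "\<forall>i<N-1. \<forall>j<N-1. (\<Sum>k<N. e i k * e j k) = (if i = j then 1 else 0)"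
    and sv: "(\<Sum>k<N. v k) = 0" and a: "a < N"
  shows "v a = (\<Sum>j<N-1. ip N v (e j) * e j a)"
proof -
  define f where "f j = (if j < N-1 then e j else (\<lambda>k. 1 / sqrt (real N)))" for j
  have sq: "1 / sqrt (real N) * (1 / sqrt (real N)) = 1 / real N" using N
    by (simp add: real_sqrt_mult[symmetric])
  have orth: "\<forall>i<N. \<forall>j<N. (\<Sum>k<N. f i k * f j k) = (if i = j then 1 else 0)"
  proof (intro allI impI)
    fix i j assume ij: "i < N" "j < N"
    consider "i < N-1" "j < N-1" | "i < N-1" "j = N-1" | "i = N-1" "j < N-1" | "i = N-1" "j = N-1"
      using ij by linarith
    then show "(\<Sum>k<N. f i k * f j k) = (if i = j then 1 else 0)"
    proof cases
      case 1 then show ?thesis using on by (simp add: f_def)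
    next
      case 2
      then have "(\<Sum>k<N. f i k * f j k) = (\<Sum>k<N. e i k) * (1 / sqrt (real N))"
        by (simp add: f_def sum_divide_distrib)
      then show ?thesis using 2 z by auto
    next
      case 3
      then have "(\<Sum>k<N. f i k * f j k) = (1 / sqrt (real N)) * (\<Sum>k<N. e j k)"
        by (simp add: f_def sum_distrib_left)
      then show ?thesis using 3 z by auto
    next
      case 4
      then have "(\<Sum>k<N. f i k * f j k) = real N * (1 / real N)"
        using sq by (simp add: f_def)
      then show ?thesis using 4 N by simp
    qed
  qed
  have comp: "\<forall>a<N. \<forall>b<N. (\<Sum>i<N. f i a * f i b) = (if a = b then 1 else 0)"
    by (rule completeness[OF orth])
  have NS: "N = Suc (N - 1)" using N by simp
  have cb: "(\<Sum>j<N-1. e j a * e j b) = (if a = b then 1 else 0) - 1 / real N" if "b < N" for b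
  proof -
    have "(\<Sum>i<N. f i a * f i b) = (\<Sum>j<N-1. f j a * f j b) + f (N-1) a * f (N-1) b"
      by (subst NS) (simp only: sum.lessThan_Suc diff_Suc_1)
    also have "(\<Sum>j<N-1. f j a * f j b) = (\<Sum>j<N-1. e j a * e j b)"
      by (intro sum.cong) (auto simp: f_def)
    also have "f (N-1) a * f (N-1) b = 1 / real N" using sq by (simp add: f_def)
    finally show ?thesis using comp a that by simp
  qed
  have "(\<Sum>j<N-1. ip N v (e j) * e j a) = (\<Sum>j<N-1. \<Sum>k<N. v k * e j k * e j a)"
    by (simp add: ip_def sum_distrib_right)
  also have "\<dots> = (\<Sum>k<N. \<Sum>j<N-1. v k * (e j a * e j k))"
    by (subst sum.swap) (simp add: algebra_simps)
  also have "\<dots> = (\<Sum>k<N. v k * ((if a = k then 1 else 0) - 1 / real N))"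
  proof (intro sum.cong refl)
    fix k assume "k \<in> {..<N}"
    then have "(\<Sum>j<N-1. e j a * e j k) = (if a = k then 1 else 0) - 1 / real N" using cb by simp
    then show "(\<Sum>j<N-1. v k * (e j a * e j k)) = v k * ((if a = k then 1 else 0) - 1 / real N)"
      by (simp add: sum_distrib_left[symmetric])
  qed
  also have "\<dots> = (\<Sum>k<N. (if k = a then v k else 0) - v k / real N)"
    by (intro sum.cong refl) (auto simp: right_diff_distrib)
  also have "\<dots> = (\<Sum>k<N. (if k = a then v k else 0)) - (\<Sum>k<N. v k) / real N"
    by (simp only: sum_subtractf sum_divide_distrib)
  also have "\<dots> = v a" using a sv by simp
  finally show ?thesis by simp
qed

lemma ip_comm: "ip N u v = ip N v u"
  unfolding ip_def by (simp add: mult.commute)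

lemma spec_ip:
  fixes e :: "nat \<Rightarrow> nat \<Rightarrow> real" and m :: nat
  assumes "\<forall>a<N. x a = (\<Sum>j<m. d j * e j a)"
  shows "ip N y x = (\<Sum>j<m. d j * ip N y (e j))"
proof -
  have "ip N y x = (\<Sum>a<N. \<Sum>j<m. y a * (d j * e j a))"
    unfolding ip_def using assms by (intro sum.cong refl) (simp add: sum_distrib_left)
  also have "\<dots> = (\<Sum>j<m. \<Sum>a<N. d j * (y a * e j a))"
    by (subst sum.swap) (simp add: algebra_simps)
  finally show ?thesis by (simp add: ip_def sum_distrib_left)
qed

lemma spec_mv:
  fixes e :: "nat \<Rightarrow> nat \<Rightarrow> real" and m :: nat
  assumes "\<forall>a<N. x a = (\<Sum>j<m. d j * e j a)"
    and "\<forall>j<m. \<forall>a<N. mat_vec N M (e j) a = \<mu> j * e j a"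
    and "a < N"
  shows "mat_vec N M x a = (\<Sum>j<m. d j * \<mu> j * e j a)"
proof -
  have "mat_vec N M x a = (\<Sum>b<N. \<Sum>j<m. M a b * (d j * e j b))"
    unfolding mat_vec_def using assms(1) by (intro sum.cong refl) (simp add: sum_distrib_left)
  also have "\<dots> = (\<Sum>j<m. d j * mat_vec N M (e j) a)"
    by (subst sum.swap) (simp add: mat_vec_def sum_distrib_left algebra_simps)
  also have "\<dots> = (\<Sum>j<m. d j * \<mu> j * e j a)"
    using assms(2,3) by (intro sum.cong refl) simp
  finally show ?thesis .
qed

lemma ortho_coeff:
  fixes e :: "nat \<Rightarrow> nat \<Rightarrow> real" and m :: nat
  assumes on: "\<forall>i<m. \<forall>j<m. ip N (e i) (e j) = (if i = j then 1 else 0)"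
    and x: "\<forall>a<N. x a = (\<Sum>j<m. d j * e j a)" and l: "l < m"
  shows "ip N x (e l) = d l"
proof -
  have "ip N x (e l) = ip N (e l) x" by (rule ip_comm)
  also have "\<dots> = (\<Sum>j<m. d j * ip N (e l) (e j))" by (rule spec_ip[OF x])
  also have "\<dots> = (\<Sum>j<m. if j = l then d j else 0)"
    using on l by (intro sum.cong refl) auto
  also have "\<dots> = d l" using l by (subst sum.delta) auto
  finally show ?thesis .
qed

lemma gap_bound:
  fixes e :: "nat \<Rightarrow> nat \<Rightarrow> real" and m :: nat
  assumes on: "\<forall>i<m. \<forall>j<m. ip N (e i) (e j) = (if i = j then 1 else 0)"
    and eig: "\<forall>j<m. \<forall>a<N. mat_vec N M (e j) a = \<mu>s j * e j a"
    and vx: "\<forall>a<N. v a = (\<Sum>j<m. ip N v (e j) * e j a)"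
    and g: "g > 0" and gap: "\<forall>j<m. \<mu>s j \<noteq> \<mu> \<longrightarrow> g \<le> \<bar>\<mu>s j - \<mu>\<bar>"
    and r: "\<forall>a<N. r a = mat_vec N M v a - \<mu> * v a"
  shows "\<bar>ip N v r\<bar> \<le> ip N r r / g"
proof -
  define c where "c j = ip N v (e j)" for j
  define d where "d j = c j * (\<mu>s j - \<mu>)" for j
  have rx: "\<forall>a<N. r a = (\<Sum>j<m. d j * e j a)"
  proof (intro allI impI)
    fix a assume a: "a < N"
    have "r a = (\<Sum>j<m. c j * \<mu>s j * e j a) - \<mu> * (\<Sum>j<m. c j * e j a)"
      using r a spec_mv[where N=N and x=v and m=m and d=c and e=e and M=M and \<mu>=\<mu>s and a=a] vx eig unfolding c_def by simp
    then show "r a = (\<Sum>j<m. d j * e j a)"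
      by (simp add: d_def sum_distrib_left sum_subtractf[symmetric] algebra_simps)
  qed
  have vr: "ip N v r = (\<Sum>j<m. c j * c j * (\<mu>s j - \<mu>))"
    using spec_ip[OF rx, of v] by (simp add: d_def c_def algebra_simps)
  have "ip N r r = (\<Sum>j<m. d j * ip N r (e j))" by (rule spec_ip[OF rx])
  also have "\<dots> = (\<Sum>j<m. d j * d j)" using ortho_coeff[OF on rx] by (intro sum.cong refl) simp
  finally have rr: "ip N r r = (\<Sum>j<m. d j * d j)" .
  have tm: "\<bar>c j * c j * (\<mu>s j - \<mu>)\<bar> \<le> d j * d j / g" if "j < m" for j
  proof (cases "\<mu>s j = \<mu>")
    case True then show ?thesis by (simp add: d_def)
  next
    case False
    then have G: "g \<le> \<bar>\<mu>s j - \<mu>\<bar>" using gap that by auto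
    have "g * \<bar>\<mu>s j - \<mu>\<bar> \<le> \<bar>\<mu>s j - \<mu>\<bar> * \<bar>\<mu>s j - \<mu>\<bar>"
      using G by (intro mult_right_mono) auto
    then have "g * (c j * c j * \<bar>\<mu>s j - \<mu>\<bar>) \<le> c j * c j * ((\<mu>s j - \<mu>) * (\<mu>s j - \<mu>))"
      by (metis (no_types, lifting) abs_mult_self_eq mult.left_commute mult_left_mono zero_le_square)
    moreover have "\<bar>c j * c j * (\<mu>s j - \<mu>)\<bar> = c j * c j * \<bar>\<mu>s j - \<mu>\<bar>"
      by (simp add: abs_mult)
    moreover have "d j * d j = c j * c j * ((\<mu>s j - \<mu>) * (\<mu>s j - \<mu>))"
      by (simp add: d_def algebra_simps)
    ultimately show ?thesis using g by (simp add: pos_le_divide_eq mult.commute)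
  qed
  have "\<bar>ip N v r\<bar> \<le> (\<Sum>j<m. \<bar>c j * c j * (\<mu>s j - \<mu>)\<bar>)" unfolding vr by (rule sum_abs)
  also have "\<dots> \<le> (\<Sum>j<m. d j * d j / g)" by (intro sum_mono tm) simp
  also have "\<dots> = ip N r r / g" by (simp add: rr sum_divide_distrib)
  finally show ?thesis .
qed

lemma negdef_bound:
  fixes e :: "nat \<Rightarrow> nat \<Rightarrow> real" and m :: nat
  assumes eig: "\<forall>j<m. \<forall>a<N. mat_vec N M (e j) a = \<mu>s j * e j a"
    and vx: "\<forall>a<N. v a = (\<Sum>j<m. ip N v (e j) * e j a)"
    and neg: "\<forall>j<m. \<mu>s j \<le> - c"
  shows "ip N v (mat_vec N M v) \<le> - c * ip N v v"
proof -
  define cc where "cc j = ip N v (e j)" for j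
  have mx: "\<forall>a<N. mat_vec N M v a = (\<Sum>j<m. (cc j * \<mu>s j) * e j a)"
    using spec_mv[where N=N and x=v and m=m and d=cc and e=e and M=M and \<mu>=\<mu>s] vx eig unfolding cc_def by simp
  have "ip N v (mat_vec N M v) = (\<Sum>j<m. cc j * \<mu>s j * cc j)"
    using spec_ip[OF mx, of v] unfolding cc_def by simp
  also have "\<dots> \<le> (\<Sum>j<m. - c * (cc j * cc j))"
  proof (intro sum_mono)
    fix j assume "j \<in> {..<m}"
    then have "\<mu>s j * (cc j * cc j) \<le> - c * (cc j * cc j)"
      using neg by (intro mult_right_mono) auto
    then show "cc j * \<mu>s j * cc j \<le> - c * (cc j * cc j)" by (simp add: algebra_simps)
  qed
  also have "\<dots> = - c * ip N v v"
    using spec_ip[OF vx, of v] by (simp add: cc_def sum_distrib_left)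
  finally show ?thesis .
qed




lemma analytic_deriv:
  assumes "real_analytic f"
  shows "\<exists>d. DERIV f x :> d"
proof -
  obtain r c where r: "r > 0" and S: "\<forall>y. \<bar>y - x\<bar> < r \<longrightarrow> (\<lambda>n. c n * (y - x) ^ n) sums f y"
    using assms unfolding real_analytic_def by blast
  define h where "h z = (\<Sum>n. c (Suc n) * z ^ n)" for z :: real
  have f0: "f x = c 0"
  proof -
    have "(\<lambda>n. c n * 0 ^ n) sums f x" using S r by (metis abs_zero diff_self)
    then have "f x = (\<Sum>n. c n * (0::real) ^ n)" by (rule sums_unique)
    then show ?thesis by simp
  qed
  have hs: "(\<lambda>n. c (Suc n) * z ^ n) sums ((f (x + z) - c 0) / z)" if "\<bar>z\<bar> < r" "z \<noteq> 0" for z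
  proof -
    have "(\<lambda>n. c n * z ^ n) sums f (x + z)" using S that by (metis add_diff_cancel_left')
    then have "(\<lambda>n. c (Suc n) * z ^ (Suc n)) sums (f (x + z) - c 0)"
      by (subst sums_Suc_iff) simp
    then have "(\<lambda>n. z * (c (Suc n) * z ^ n)) sums (f (x + z) - c 0)"
      by (simp add: algebra_simps)
    then show ?thesis using that(2) by (rule sums_mult_D)
  qed
  have sm: "summable (\<lambda>n. c (Suc n) * (r/2) ^ n)"
    using hs[of "r/2"] r by (auto simp: summable_def)
  have hc: "isCont h 0"
    unfolding h_def by (rule isCont_powser[OF sm]) (use r in simp)
  define g where "g z = (if \<bar>z - x\<bar> < r then h (z - x) else (f z - f x) / (z - x))" for z
  have fg: "\<forall>z. f z - f x = g z * (z - x)"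
  proof
    fix z
    show "f z - f x = g z * (z - x)"
    proof (cases "\<bar>z - x\<bar> < r")
      case True
      show ?thesis
      proof (cases "z = x")
        case True then show ?thesis by simp
      next
        case False
        then have "h (z - x) = (f (x + (z - x)) - c 0) / (z - x)"
          unfolding h_def using hs[of "z - x"] True sums_unique by fastforce
        then show ?thesis using True False f0 by (simp add: g_def)
      qed
    next
      case False
      then have "z \<noteq> x" using r by auto
      then show ?thesis using False by (simp add: g_def)
    qed
  qed
  have ev: "eventually (\<lambda>z. g z = h (z - x)) (nhds x)"
    unfolding eventually_nhds_metric using r by (intro exI[of _ r]) (auto simp: g_def dist_real_def)
  have c1: "isCont (\<lambda>z. z - x) x" by simp
  have c2: "isCont h ((\<lambda>z. z - x) x)" using hc by simp
  have "isCont (\<lambda>z. h (z - x)) x" using isCont_o2[OF c1 c2] by simp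
  then have "isCont g x" using isCont_cong[OF ev] by simp
  then have "DERIV f x :> g x" using fg CARAT_DERIV by blast
  then show ?thesis by blast
qed




lemma quot_bound:
  fixes g s dl q \<beta> :: real
  assumes g: "g > 0" and s: "s > 0" and h: "\<bar>dl - s* q\<bar> \<le> (2* dl^2 + 2* s^2* \<beta>)/g"
  shows "\<bar>dl/s - q\<bar> \<le> 2* s*((dl/s)^2 + \<beta>)/g"
proof -
  define u where "u = dl/s"
  have du: "dl = u * s" using s by (simp add: u_def)
  have "dl - s* q = s * (u - q)" by (simp add: du algebra_simps)
  then have "\<bar>dl - s* q\<bar> = s * \<bar>u - q\<bar>" using s by (simp add: abs_mult)
  moreover have "(2* dl^2 + 2* s^2* \<beta>)/g = s * (2* s*(u^2 + \<beta>)/g)"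
    by (simp add: du power2_eq_square algebra_simps)
  ultimately have "s * \<bar>u - q\<bar> \<le> s * (2* s*(u^2 + \<beta>)/g)" using h by metis
  then have "\<bar>u - q\<bar> \<le> 2* s*(u^2 + \<beta>)/g" using s mult_le_cancel_left_pos by blast
  then show ?thesis by (simp add: u_def)
qed

lemma realA:
  fixes g s dl q \<beta> d :: real
  assumes g: "g > 0" and b: "\<beta> \<ge> 0" and q: "q \<ge> 0" and s: "s > 0"
    and h: "\<bar>dl - s* q\<bar> \<le> (2* dl^2 + 2* s^2* \<beta>)/g"
    and u: "\<bar>dl/s - d\<bar> < -d/2" and d: "d < 0"
    and se: "s < -d* g/(8*(4* d^2+\<beta>))"
  shows False
proof -
  define u where "u = dl/s"
  have qb: "\<bar>u - q\<bar> \<le> 2* s*(u^2 + \<beta>)/g" using quot_bound[OF g s h] by (simp add: u_def)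
  have "\<bar>u - d\<bar> < -d/2" using u by (simp add: u_def)
  then have "u - d < -d/2" "d - u < -d/2" by (auto simp: abs_less_iff)
  then have u1: "u < d/2" "\<bar>u\<bar> \<le> 2* \<bar>d\<bar>" using d by (auto simp: abs_le_iff)
  have "\<bar>u\<bar>^2 \<le> (2* \<bar>d\<bar>)^2" using u1(2) by (intro power_mono) auto
  then have "u^2 \<le> (2* \<bar>d\<bar>)^2" by simp
  then have u2: "u^2 \<le> 4* d^2" by (simp add: power_mult_distrib)
  have P: "4* d^2+\<beta> > 0" using d b by (simp add: add_pos_nonneg)
  have "2* s*(u^2 + \<beta>)/g \<le> 2* s*(4* d^2 + \<beta>)/g"
    using u2 s g by (intro divide_right_mono mult_left_mono) auto
  also have "\<dots> < 2*(-d* g/(8*(4* d^2+\<beta>)))*(4* d^2 + \<beta>)/g"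
    using se g P by (intro divide_strict_right_mono mult_strict_right_mono) auto
  also have "\<dots> = -d/4"
  proof -
    define P where "P = 4* d^2+\<beta>"
    have "P \<noteq> 0" using P by (simp add: P_def)
    then have "2*(-d* g/(8* P))* P/g = -d/4" using g by (simp add: field_simps)
    then show ?thesis by (simp add: P_def)
  qed
  finally have "\<bar>u - q\<bar> < -d/4" using qb by simp
  then show False using u1 q d by linarith
qed

lemma realB:
  fixes g s dl q \<beta> c t0 \<epsilon> :: real
  assumes g: "g > 0" and b: "\<beta> \<ge> 0" and q: "q \<ge> 0" and s: "s > 0" and c: "c > 0"
    and h: "\<bar>dl - s* q\<bar> \<le> (2* dl^2 + 2* s^2* \<beta>)/g"
    and u: "\<bar>dl/s\<bar> < \<epsilon>" and e1: "\<epsilon> \<le> 1" and e2: "\<epsilon> \<le> c/(8*(2+\<bar>t0\<bar>))"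
    and s1: "s \<le> 1" and s2: "s \<le> c* g/(16*(2+\<bar>t0\<bar>)*(1+\<beta>))"
    and H: "c \<le> q*(1+s+t0) - dl"
  shows False
proof -
  define u where "u = dl/s"
  define K where "K = 2 + \<bar>t0\<bar>"
  have K: "K \<ge> 2" by (simp add: K_def)
  have qb: "\<bar>u - q\<bar> \<le> 2* s*(u^2 + \<beta>)/g" using quot_bound[OF g s h] by (simp add: u_def)
  have "\<bar>u\<bar> \<le> 1" using u e1 by (simp add: u_def)
  then have "u^2 \<le> 1" by (simp add: abs_square_le_1)
  then have "2* s*(u^2 + \<beta>)/g \<le> 2* s*(1 + \<beta>)/g"
    using s g by (intro divide_right_mono mult_left_mono) auto
  also have "\<dots> \<le> 2*(c* g/(16* K*(1+\<beta>)))*(1+\<beta>)/g"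
    using s2 g b by (intro divide_right_mono mult_right_mono mult_left_mono) (auto simp: K_def)
  also have "\<dots> = c/(8* K)"
  proof -
    define P where "P = 1 + \<beta>"
    have "P \<noteq> 0" "K \<noteq> 0" using b K by (auto simp: P_def)
    then have "2*(c* g/(16* K* P))* P/g = c/(8* K)" using g by (simp add: field_simps)
    then show ?thesis by (simp add: P_def)
  qed
  finally have uq: "\<bar>u - q\<bar> \<le> c/(8* K)" using qb by simp
  have e2': "\<epsilon> \<le> c/(8* K)" using e2 by (simp add: K_def)
  have ua: "\<bar>u\<bar> < \<epsilon>" using u by (simp add: u_def)
  have tri: "q \<le> \<bar>u\<bar> + \<bar>u - q\<bar>" by arith
  have cc: "c/(8* K) + c/(8* K) = c/(4* K)" by simp
  have qK: "q \<le> c/(4* K)" using tri ua uq e2' cc by linarith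
  have "q*(1+s+t0) \<le> q* K" using q s1 by (intro mult_left_mono) (auto simp: K_def)
  also have "\<dots> \<le> c/(4* K) * K" using qK K by (intro mult_right_mono) auto
  also have "\<dots> = c/4" using K by simp
  finally have A: "q*(1+s+t0) \<le> c/4" .
  have "\<bar>dl\<bar> = \<bar>u\<bar> * s" using s by (simp add: u_def abs_mult abs_divide)
  also have "\<dots> \<le> \<epsilon> * 1" using ua s s1 by (intro mult_mono) auto
  finally have "\<bar>dl\<bar> \<le> c/(8* K)" using e2' by simp
  also have "\<dots> \<le> c/16" using K c by (simp add: field_simps)
  finally have "\<bar>dl\<bar> \<le> c/16" .
  then show False using A H c by linarith
qed




lemma quot_near:
  fixes f :: "real \<Rightarrow> real"
  assumes "DERIV f t0 :> d" "e > 0"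
  shows "\<exists>d1>0. \<forall>t. t \<noteq> t0 \<and> \<bar>t - t0\<bar> < d1 \<longrightarrow> \<bar>(f t - f t0)/(t - t0) - d\<bar> < e"
proof -
  have "((\<lambda>y. (f y - f t0) / (y - t0)) \<longlongrightarrow> d) (at t0)"
    using assms(1) has_field_derivative_iff by blast
  from tendstoD[OF this assms(2)]
  have "eventually (\<lambda>y. dist ((f y - f t0) / (y - t0)) d < e) (at t0)" .
  then show ?thesis unfolding eventually_at by (auto simp: dist_real_def)
qed

lemma mv_lin:
  "mat_vec N (\<lambda>a b. A a b + t * B a b) v k = mat_vec N A v k + t * mat_vec N B v k"
  unfolding mat_vec_def by (simp add: sum.distrib sum_distrib_left algebra_simps)

lemma coord_le1:
  assumes "ip N v v = 1" "b < N"
  shows "\<bar>v b\<bar> \<le> 1"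
proof -
  have "v b * v b \<le> (\<Sum>k<N. v k * v k)"
    using assms(2) by (intro member_le_sum) auto
  then have "(v b)^2 \<le> 1" using assms(1) by (simp add: ip_def power2_eq_square)
  then show ?thesis by (simp add: abs_square_le_1)
qed

lemma Bbound:
  fixes B :: "nat \<Rightarrow> nat \<Rightarrow> real"
  assumes "ip N v v = 1"
  shows "ip N (mat_vec N B v) (mat_vec N B v) \<le> real N * (\<Sum>a<N. \<Sum>b<N. \<bar>B a b\<bar>)^2"
proof -
  define K where "K = (\<Sum>a<N. \<Sum>b<N. \<bar>B a b\<bar>)"
  have rowK: "\<bar>mat_vec N B v a\<bar> \<le> K" if "a < N" for a
  proof -
    have "\<bar>mat_vec N B v a\<bar> \<le> (\<Sum>b<N. \<bar>B a b * v b\<bar>)" unfolding mat_vec_def by (rule sum_abs)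
    also have "\<dots> \<le> (\<Sum>b<N. \<bar>B a b\<bar>)"
    proof (intro sum_mono)
      fix b assume "b \<in> {..<N}"
      then have "\<bar>v b\<bar> \<le> 1" using coord_le1[OF assms] by simp
      then show "\<bar>B a b * v b\<bar> \<le> \<bar>B a b\<bar>" by (simp add: abs_mult mult_left_le)
    qed
    also have "\<dots> \<le> K" unfolding K_def
      using member_le_sum[of a "{..<N}" "\<lambda>a. \<Sum>b<N. \<bar>B a b\<bar>"] that
      by (simp add: sum_nonneg)
    finally show ?thesis .
  qed
  have "ip N (mat_vec N B v) (mat_vec N B v) \<le> (\<Sum>a<N. K^2)"
    unfolding ip_def
  proof (intro sum_mono)
    fix a assume "a \<in> {..<N}"
    then have "\<bar>mat_vec N B v a\<bar> \<le> K" using rowK by simp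
    then have "\<bar>mat_vec N B v a\<bar>^2 \<le> K^2" by (rule power_mono) simp
    then show "mat_vec N B v a * mat_vec N B v a \<le> K^2" by (simp add: power2_eq_square)
  qed
  then show ?thesis by (simp add: K_def)
qed

lemma branch_deriv:
  fixes A B :: "nat \<Rightarrow> nat \<Rightarrow> real" and lam :: "nat \<Rightarrow> real \<Rightarrow> real"
  assumes N: "0 < N" and i: "i < N - 1"
    and Bpos: "\<forall>v. 0 \<le> ip N v (mat_vec N B v)"
    and c: "0 < c"
    and H2: "\<forall>v. (\<Sum>k<N. v k) = 0 \<longrightarrow> ip N v (mat_vec N A v) - ip N v (mat_vec N B v) \<le> - c * ip N v v"
    and basis: "\<forall>t. \<exists>v::nat\<Rightarrow>nat\<Rightarrow>real. (\<forall>i<N-1. (\<Sum>k<N. v i k) = 0) \<and>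
        (\<forall>i<N-1. \<forall>j<N-1. (\<Sum>k<N. v i k * v j k) = (if i = j then 1 else 0)) \<and>
        (\<forall>i<N-1. \<forall>k<N. mat_vec N (\<lambda>a b. A a b + t * B a b) (v i) k = lam i t * v i k)"
    and D: "DERIV (lam i) t0 :> d"
  shows "0 \<le> d \<and> (lam i t0 = 0 \<longrightarrow> 0 < d)"
proof -
  obtain V where V0: "\<forall>t. (\<forall>i<N-1. (\<Sum>k<N. V t i k) = 0) \<and>
        (\<forall>i<N-1. \<forall>j<N-1. (\<Sum>k<N. V t i k * V t j k) = (if i = j then 1 else 0)) \<and>
        (\<forall>i<N-1. \<forall>k<N. mat_vec N (\<lambda>a b. A a b + t * B a b) (V t i) k = lam i t * V t i k)"
    using choice[OF basis] by blast
  note V = spec[OF V0]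
  define m where "m = N - 1"
  define e where "e = V t0"
  define \<mu> where "\<mu> = lam i t0"
  define M0 where "M0 = (\<lambda>a b. A a b + t0 * B a b)"
  have on0: "\<forall>i<m. \<forall>j<m. ip N (e i) (e j) = (if i = j then 1 else 0)"
    using V[of t0] unfolding e_def m_def ip_def by blast
  have eig0: "\<forall>j<m. \<forall>a<N. mat_vec N M0 (e j) a = lam j t0 * e j a"
    using V[of t0] unfolding e_def m_def M0_def by blast
  define G where "G = (\<lambda>j. \<bar>lam j t0 - \<mu>\<bar>) ` {j. j < m \<and> lam j t0 \<noteq> \<mu>}"
  define g where "g = Min (insert 1 G)"
  have finG: "finite (insert 1 G)" unfolding G_def by auto
  have gpos: "g > 0"
    unfolding g_def using finG by (subst Min_gr_iff) (auto simp: G_def)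
  have gap: "\<forall>j<m. lam j t0 \<noteq> \<mu> \<longrightarrow> g \<le> \<bar>lam j t0 - \<mu>\<bar>"
    unfolding g_def using finG by (auto simp: G_def intro!: Min_le)
  define \<beta> where "\<beta> = real N * (\<Sum>a<N. \<Sum>b<N. \<bar>B a b\<bar>)^2"
  have bpos: "\<beta> \<ge> 0" by (simp add: \<beta>_def)
  have E: "\<bar>(lam i t - \<mu>) - (t - t0) * ip N (V t i) (mat_vec N B (V t i))\<bar>
             \<le> (2*(lam i t - \<mu>)^2 + 2*(t - t0)^2* \<beta>)/g
          \<and> 0 \<le> ip N (V t i) (mat_vec N B (V t i))
          \<and> (\<mu> = 0 \<longrightarrow> c \<le> ip N (V t i) (mat_vec N B (V t i)) * (1 + (t - t0) + t0) - (lam i t - \<mu>))" for t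
  proof -
    define v where "v = V t i"
    define s where "s = t - t0"
    define dl where "dl = lam i t - \<mu>"
    define q where "q = ip N v (mat_vec N B v)"
    have vs: "(\<Sum>k<N. v k) = 0" using V[of t] i unfolding v_def by blast
    have vv: "ip N v v = 1" using V[of t] i unfolding v_def ip_def by auto
    have ve: "\<forall>a<N. mat_vec N A v a + t * mat_vec N B v a = lam i t * v a"
      using V[of t] i unfolding v_def mv_lin by blast
    define r where "r a = mat_vec N M0 v a - \<mu> * v a" for a
    have ra: "r a = dl * v a - s * mat_vec N B v a" if "a < N" for a
      using ve that unfolding r_def M0_def mv_lin dl_def s_def by (auto simp: algebra_simps)
    have vexp: "\<forall>a<N. v a = (\<Sum>j<m. ip N v (e j) * e j a)"
      using expand[OF N _ _ vs] V[of t0] unfolding m_def e_def by blast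
    have gb: "\<bar>ip N v r\<bar> \<le> ip N r r / g"
      by (rule gap_bound[OF on0 eig0 vexp gpos, of \<mu> r]) (use gap in \<open>auto simp: r_def\<close>)
    have ivr: "ip N v r = dl - s * q"
    proof -
      have "ip N v r = (\<Sum>a<N. dl * (v a * v a) - s * (v a * mat_vec N B v a))"
        unfolding ip_def by (intro sum.cong refl) (simp add: ra algebra_simps)
      also have "\<dots> = dl * ip N v v - s * q"
        by (simp add: ip_def q_def sum_subtractf sum_distrib_left)
      finally show ?thesis using vv by simp
    qed
    have irr: "ip N r r \<le> 2* dl^2 + 2* s^2* \<beta>"
    proof -
      have "ip N r r \<le> (\<Sum>a<N. 2* dl^2 * (v a * v a) + 2* s^2 * (mat_vec N B v a * mat_vec N B v a))"
        unfolding ip_def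
      proof (intro sum_mono)
        fix a assume "a \<in> {..<N}"
        then have "r a * r a = (dl * v a - s * mat_vec N B v a)^2" by (simp add: ra power2_eq_square)
        also have "\<dots> \<le> 2*(dl * v a)^2 + 2*(s * mat_vec N B v a)^2"
          by (smt (verit) zero_le_power2 power2_diff power2_sum)
        also have "\<dots> = 2* dl^2 * (v a * v a) + 2* s^2 * (mat_vec N B v a * mat_vec N B v a)"
          by (simp add: power2_eq_square)
        finally show "r a * r a \<le> 2* dl^2 * (v a * v a) + 2* s^2 * (mat_vec N B v a * mat_vec N B v a)" .
      qed
      also have "\<dots> = 2* dl^2 * ip N v v + 2* s^2 * ip N (mat_vec N B v) (mat_vec N B v)"
        by (simp add: ip_def sum.distrib sum_distrib_left)
      also have "\<dots> \<le> 2* dl^2 + 2* s^2* \<beta>"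
        using Bbound[OF vv, where B=B] vv unfolding \<beta>_def by (simp add: mult_left_mono)
      finally show ?thesis .
    qed
    have "\<bar>dl - s* q\<bar> \<le> (2* dl^2 + 2* s^2* \<beta>)/g"
      using gb ivr irr gpos by (metis divide_right_mono order.trans less_imp_le)
    moreover have "0 \<le> q" using Bpos by (simp add: q_def)
    moreover have "\<mu> = 0 \<longrightarrow> c \<le> q * (1 + s + t0) - dl"
    proof
      assume mu: "\<mu> = 0"
      have h2: "ip N v (mat_vec N A v) - q \<le> - c" using H2[rule_format, OF vs] vv by (simp add: q_def)
      have "ip N v (mat_vec N M0 v) = ip N v (mat_vec N A v) + t0 * q"
        unfolding M0_def mv_lin ip_def q_def by (simp add: sum.distrib sum_distrib_left algebra_simps)
      moreover have "ip N v (mat_vec N M0 v) = ip N v r"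
        unfolding ip_def r_def using mu by simp
      ultimately have "ip N v (mat_vec N A v) = dl - s* q - t0* q" using ivr by simp
      then show "c \<le> q * (1 + s + t0) - dl" using h2 by (simp add: algebra_simps)
    qed
    ultimately show ?thesis unfolding v_def s_def dl_def q_def by simp
  qed
  have d0: "0 \<le> d"
  proof (rule ccontr)
    assume "\<not> 0 \<le> d"
    then have d: "d < 0" by simp
    obtain d1 where d1: "d1 > 0" "\<forall>t. t \<noteq> t0 \<and> \<bar>t - t0\<bar> < d1 \<longrightarrow> \<bar>(lam i t - lam i t0)/(t - t0) - d\<bar> < -d/2"
      using quot_near[OF D, of "-d/2"] d by auto
    define \<eta> where "\<eta> = -d* g/(8*(4* d^2+\<beta>))"
    have eta: "\<eta> > 0" unfolding \<eta>_def using d gpos bpos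
      by (intro divide_pos_pos mult_pos_pos) (auto intro: add_pos_nonneg)
    define s where "s = min d1 \<eta> / 2"
    have s: "s > 0" "s < d1" "s < \<eta>" using d1 eta by (auto simp: s_def)
    have Et: "\<bar>(lam i (t0+s) - \<mu>) - s * ip N (V (t0+s) i) (mat_vec N B (V (t0+s) i))\<bar>
             \<le> (2*(lam i (t0+s) - \<mu>)^2 + 2* s^2* \<beta>)/g"
         "0 \<le> ip N (V (t0+s) i) (mat_vec N B (V (t0+s) i))"
      using E[of "t0+s"] by auto
    have "\<bar>(lam i (t0+s) - \<mu>)/s - d\<bar> < -d/2"
      using d1(2)[rule_format, of "t0+s"] s unfolding \<mu>_def by auto
    then show False using realA[OF gpos bpos Et(2) s(1) Et(1) _ d] s(3) unfolding \<eta>_def by blast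
  qed
  have "lam i t0 = 0 \<longrightarrow> 0 < d"
  proof (intro impI, rule ccontr)
    assume mu0: "lam i t0 = 0" and "\<not> 0 < d"
    then have dz: "d = 0" using d0 by simp
    define K where "K = 2 + \<bar>t0\<bar>"
    have K: "K \<ge> 2" by (simp add: K_def)
    define \<epsilon> where "\<epsilon> = min 1 (c/(8* K))"
    have ep: "\<epsilon> > 0" "\<epsilon> \<le> 1" "\<epsilon> \<le> c/(8*(2+\<bar>t0\<bar>))" using c K by (auto simp: \<epsilon>_def K_def)
    obtain d1 where d1: "d1 > 0" "\<forall>t. t \<noteq> t0 \<and> \<bar>t - t0\<bar> < d1 \<longrightarrow> \<bar>(lam i t - lam i t0)/(t - t0) - d\<bar> < \<epsilon>"
      using quot_near[OF D ep(1)] by auto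
    define \<eta> where "\<eta> = min 1 (c* g/(16*(2+\<bar>t0\<bar>)*(1+\<beta>)))"
    have eta: "\<eta> > 0" unfolding \<eta>_def using c gpos bpos
      by (auto intro!: divide_pos_pos mult_pos_pos)
    define s where "s = min d1 \<eta> / 2"
    have se: "s \<le> \<eta>" "s > 0" "s < d1" using d1 eta by (auto simp: s_def)
    have "\<eta> \<le> 1" "\<eta> \<le> c* g/(16*(2+\<bar>t0\<bar>)*(1+\<beta>))" unfolding \<eta>_def by auto
    then have s: "s > 0" "s < d1" "s \<le> 1" "s \<le> c* g/(16*(2+\<bar>t0\<bar>)*(1+\<beta>))"
      using se by linarith+
    have Et: "\<bar>(lam i (t0+s) - \<mu>) - s * ip N (V (t0+s) i) (mat_vec N B (V (t0+s) i))\<bar>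
             \<le> (2*(lam i (t0+s) - \<mu>)^2 + 2* s^2* \<beta>)/g"
         "0 \<le> ip N (V (t0+s) i) (mat_vec N B (V (t0+s) i))"
         "c \<le> ip N (V (t0+s) i) (mat_vec N B (V (t0+s) i)) * (1 + s + t0) - (lam i (t0+s) - \<mu>)"
      using E[of "t0+s"] mu0 unfolding \<mu>_def by auto
    have "\<bar>(lam i (t0+s) - \<mu>)/s\<bar> < \<epsilon>"
      using d1(2)[rule_format, of "t0+s"] s dz unfolding \<mu>_def by auto
    then show False using realB[OF gpos bpos Et(2) s(1) c Et(1) _ ep(2) ep(3) s(3) s(4) Et(3)] by blast
  qed
  then show ?thesis using d0 by blast
qed




lemma lap_ext: "laplacian N (sg_at \<gamma> t) = (\<lambda>a b. laplacian N (Wp \<gamma>) a b + t * laplacian N (Wn \<gamma>) a b)"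
  by (intro ext) (rule lap_lin)

lemma negdef_graph:
  assumes sg: "signed_graph N \<gamma>" and cn: "sg_connected N \<gamma>" and N: "0 < N - 1"
    and eb: "restricted_eigen_branches N (\<lambda>t. laplacian N (sg_at \<gamma> t)) lam"
  shows "\<exists>c>0. \<forall>v. (\<Sum>k<N. v k) = 0 \<longrightarrow>
     ip N v (mat_vec N (laplacian N (Wp \<gamma>)) v) - ip N v (mat_vec N (laplacian N (Wn \<gamma>)) v) \<le> - c * ip N v v"
proof -
  define A where "A = laplacian N (Wp \<gamma>)"
  define B where "B = laplacian N (Wn \<gamma>)"
  define M where "M = laplacian N (sg_at \<gamma> (-1))"
  have N0: "0 < N" using N by simp
  have Mv: "mat_vec N M v k = mat_vec N A v k - mat_vec N B v k" for v k
    unfolding M_def A_def B_def lap_ext mv_lin by simp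
  have qM: "ip N v (mat_vec N M v) = ip N v (mat_vec N A v) - ip N v (mat_vec N B v)" for v
    unfolding ip_def Mv by (simp add: right_diff_distrib sum_subtractf)
  obtain e where e: "\<forall>i<N-1. (\<Sum>k<N. e i k) = 0"
      "\<forall>i<N-1. \<forall>j<N-1. (\<Sum>k<N. e i k * e j k) = (if i = j then 1 else 0)"
      "\<forall>i<N-1. \<forall>k<N. mat_vec N M (e i) k = lam i (-1) * e i k"
    using eb unfolding restricted_eigen_branches_def M_def by blast
  have neg: "lam j (-1) < 0" if j: "j < N - 1" for j
  proof -
    have one: "ip N (e j) (e j) = 1" using e(2) j by (simp add: ip_def)
    have "ip N (e j) (mat_vec N M (e j)) = (\<Sum>k<N. lam j (-1) * (e j k * e j k))"
      unfolding ip_def using e(3) j by (intro sum.cong refl) (simp add: algebra_simps)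
    also have "\<dots> = lam j (-1)" using one by (simp add: ip_def sum_distrib_left[symmetric])
    finally have eq: "lam j (-1) = ip N (e j) (mat_vec N A (e j)) - ip N (e j) (mat_vec N B (e j))"
      using qM by simp
    have a: "ip N (e j) (mat_vec N A (e j)) \<le> 0" unfolding A_def by (rule qA_le[OF sg])
    have b: "ip N (e j) (mat_vec N B (e j)) \<ge> 0" unfolding B_def by (rule qB_ge[OF sg])
    show ?thesis
    proof (rule ccontr)
      assume "\<not> lam j (-1) < 0"
      then have "ip N (e j) (mat_vec N A (e j)) = 0" "ip N (e j) (mat_vec N B (e j)) = 0"
        using eq a b by linarith+
      then have "\<forall>k<N. e j k = 0"
        using conn_zero[OF sg cn N0, of "e j"] e(1) j unfolding A_def B_def by blast
      then have "ip N (e j) (e j) = 0" unfolding ip_def by simp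
      then show False using one by simp
    qed
  qed
  define c where "c = Min ((\<lambda>j. - lam j (-1)) ` {..<N-1})"
  have "0 \<in> {..<N-1}" using N by simp
  then have ne: "(\<lambda>j. - lam j (-1)) ` {..<N-1} \<noteq> {}" by blast
  have cpos: "c > 0" unfolding c_def using ne neg by (subst Min_gr_iff) auto
  have cle: "\<forall>j<N-1. lam j (-1) \<le> - c"
  proof (intro allI impI)
    fix j assume "j < N - 1"
    then have "c \<le> - lam j (-1)" unfolding c_def by (intro Min_le) auto
    then show "lam j (-1) \<le> - c" by simp
  qed
  have "\<forall>v. (\<Sum>k<N. v k) = 0 \<longrightarrow> ip N v (mat_vec N A v) - ip N v (mat_vec N B v) \<le> - c * ip N v v"
  proof (intro allI impI)
    fix v :: "nat \<Rightarrow> real" assume sv: "(\<Sum>k<N. v k) = 0"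
    have vx: "\<forall>a<N. v a = (\<Sum>j<N-1. ip N v (e j) * e j a)"
      using expand[OF N0 e(1) e(2) sv] by blast
    have "ip N v (mat_vec N M v) \<le> - c * ip N v v"
      by (rule negdef_bound[OF e(3) vx cle])
    then show "ip N v (mat_vec N A v) - ip N v (mat_vec N B v) \<le> - c * ip N v v" using qM by simp
  qed
  then show ?thesis using cpos unfolding A_def B_def by blast
qed

theorem mainTheorem5:
  fixes N :: nat and \<gamma> :: "nat \<Rightarrow> nat \<Rightarrow> real" and lam :: "nat \<Rightarrow> real \<Rightarrow> real"
  assumes "signed_graph N \<gamma>"
    and "sg_connected N \<gamma>"
    and "restricted_eigen_branches N (\<lambda>t. laplacian N (sg_at \<gamma> t)) lam"
  shows "(\<forall>t v. (\<Sum>k<N. v k) = 0 \<longrightarrow> (\<Sum>k<N. mat_vec N (laplacian N (sg_at \<gamma> t)) v k) = 0)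
    \<and> (\<forall>i<N-1. mono (lam i) \<and>
         (\<forall>t. lam i t = 0 \<longrightarrow> (\<exists>d. (lam i has_real_derivative d) (at t) \<and> d > 0)))"
proof (intro conjI allI impI)
  fix t and v :: "nat \<Rightarrow> real"
  show "(\<Sum>k<N. mat_vec N (laplacian N (sg_at \<gamma> t)) v k) = 0" by (rule colsum_sg[OF assms(1)])
next
  fix i assume i: "i < N - 1"
  then have N1: "0 < N - 1" by simp
  have N0: "0 < N" using i by simp
  obtain c where c: "c > 0" and H2: "\<forall>v. (\<Sum>k<N. v k) = 0 \<longrightarrow>
     ip N v (mat_vec N (laplacian N (Wp \<gamma>)) v) - ip N v (mat_vec N (laplacian N (Wn \<gamma>)) v) \<le> - c * ip N v v"
    using negdef_graph[OF assms(1,2) N1 assms(3)] by blast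
  have Bpos: "\<forall>v. 0 \<le> ip N v (mat_vec N (laplacian N (Wn \<gamma>)) v)" using qB_ge[OF assms(1)] by blast
  have basis: "\<forall>t. \<exists>v::nat\<Rightarrow>nat\<Rightarrow>real. (\<forall>i<N-1. (\<Sum>k<N. v i k) = 0) \<and>
        (\<forall>i<N-1. \<forall>j<N-1. (\<Sum>k<N. v i k * v j k) = (if i = j then 1 else 0)) \<and>
        (\<forall>i<N-1. \<forall>k<N. mat_vec N (\<lambda>a b. laplacian N (Wp \<gamma>) a b + t * laplacian N (Wn \<gamma>) a b) (v i) k = lam i t * v i k)"
    using assms(3) unfolding restricted_eigen_branches_def lap_ext by blast
  have an: "real_analytic (lam i)" using assms(3) i unfolding restricted_eigen_branches_def by blast
  have BD: "0 \<le> d \<and> (lam i t0 = 0 \<longrightarrow> 0 < d)" if "DERIV (lam i) t0 :> d" for t0 d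
    by (rule branch_deriv[OF N0 i Bpos c H2 basis that])
  have DE: "\<exists>d. DERIV (lam i) x :> d" for x by (rule analytic_deriv[OF an])
  show "mono (lam i)"
  proof (rule monoI)
    fix x y :: real assume xy: "x \<le> y"
    have cont: "continuous_on {x..y} (lam i)"
      using DE by (intro continuous_at_imp_continuous_on) (metis DERIV_isCont)
    show "lam i x \<le> lam i y"
      by (rule DERIV_nonneg_imp_increasing_open[OF xy _ cont]) (use DE BD in blast)
  qed
  fix t assume "lam i t = 0"
  then show "\<exists>d. (lam i has_real_derivative d) (at t) \<and> d > 0" using DE[of t] BD by blast
qed


end
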